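(* For integers $d\geq 2$ and $1\leq k\leq d$, $\gamma_{gr}^{L,k}(Q_d)\geq\lceil 2^d-2^{d-(k+1)}\rceil$.
   Context: $Q_d$ is the $d$-dimensional hypercube: vertices are the $0$-$1$ strings of length $d$, adjacent iff they differ in exactly one position. For a vertex $v$, $N(v)$ is its open neighborhood and $N[v]=N(v)\cup\{v\}$. A sequence $S=(v_1,\ldots,v_m)$ of distinct vertices is a $k$-$L$-sequence if for each $i$ there is $u_i\in N[v_i]$ such that the number of indices $j<i$ with $u_i\in N(v_j)$ is less than $k$. $\gamma_{gr}^{L,k}(G)$ is the maximum length of a $k$-$L$-sequence of $G$. *)

theory Defs
  imports Complex_Main
begin

definition hc_verts :: "nat \<Rightarrow> bool list set" where
  "hc_verts d = {v. length v = d}"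

definition hc_adj :: "nat \<Rightarrow> bool list \<Rightarrow> bool list \<Rightarrow> bool" where
  "hc_adj d u v \<longleftrightarrow> u \<in> hc_verts d \<and> v \<in> hc_verts d \<and>
     card {i. i < d \<and> u ! i \<noteq> v ! i} = 1"

definition open_nbhd :: "'a set \<Rightarrow> ('a \<Rightarrow> 'a \<Rightarrow> bool) \<Rightarrow> 'a \<Rightarrow> 'a set" where
  "open_nbhd V E v = {u \<in> V. E v u}"

definition closed_nbhd :: "'a set \<Rightarrow> ('a \<Rightarrow> 'a \<Rightarrow> bool) \<Rightarrow> 'a \<Rightarrow> 'a set" where
  "closed_nbhd V E v = insert v (open_nbhd V E v)"

text \<open>k-L-sequence: distinct vertices v_1..v_m such that for each i there is
  u_i in N[v_i] with fewer than k indices j < i having u_i in N(v_j).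
  (Indices are 0-based here.)\<close>

definition is_kL_seq :: "'a set \<Rightarrow> ('a \<Rightarrow> 'a \<Rightarrow> bool) \<Rightarrow> nat \<Rightarrow> 'a list \<Rightarrow> bool" where
  "is_kL_seq V E k S \<longleftrightarrow> distinct S \<and> set S \<subseteq> V \<and>
     (\<forall>i < length S. \<exists>u \<in> closed_nbhd V E (S ! i).
        card {j. j < i \<and> u \<in> open_nbhd V E (S ! j)} < k)"

definition gamma_grLk :: "'a set \<Rightarrow> ('a \<Rightarrow> 'a \<Rightarrow> bool) \<Rightarrow> nat \<Rightarrow> nat" where
  "gamma_grLk V E k = Max {length S | S. is_kL_seq V E k S}"

end

theory Submission
  imports Defs
begin

fun par :: "bool list \<Rightarrow> bool" where
  "par [] = False"
| "par (x#xs) = (x \<noteq> par xs)"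

fun lead :: "bool list \<Rightarrow> nat" where
  "lead [] = 0"
| "lead (x#xs) = (if x then Suc (lead xs) else 0)"

definition flp :: "nat \<Rightarrow> bool list \<Rightarrow> bool list" where
  "flp i v = v[i := (\<not> v!i)]"

lemma length_flp[simp]: "length (flp i v) = length v"
  by (simp add: flp_def)

lemma par_flp: "i < length v \<Longrightarrow> par (flp i v) = (\<not> par v)"
  by (induction v arbitrary: i) (auto simp: flp_def split: nat.splits)

lemma par_append: "par (xs @ ys) = (par xs \<noteq> par ys)"
  by (induction xs) auto

lemma lead_nth: "i < lead v \<Longrightarrow> i < length v \<and> v!i"
  by (induction v arbitrary: i) (auto split: if_splits simp: nth_Cons split: nat.splits)

lemma lead_le_len: "lead v \<le> length v"
  by (induction v) auto

lemma lead_lt: "lead v < length v \<Longrightarrow> \<not> v!(lead v)"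
  by (induction v) auto

lemma lead_ge: "m \<le> length v \<Longrightarrow> (\<forall>i<m. v!i) \<Longrightarrow> m \<le> lead v"
proof (induction v arbitrary: m)
  case Nil then show ?case by simp
next
  case (Cons x xs)
  show ?case
  proof (cases m)
    case 0 then show ?thesis by simp
  next
    case (Suc m')
    have "x" using Cons.prems Suc by (metis nth_Cons_0 zero_less_Suc)
    moreover have "m' \<le> lead xs"
      using Cons.prems Suc by (intro Cons.IH) auto
    ultimately show ?thesis using Suc by simp
  qed
qed

lemma flp_flp: "flp i (flp i v) = v"
  by (cases "i < length v") (auto simp: flp_def list_update_beyond)

lemma adj_iff:
  assumes "length u = d" "length v = d"
  shows "hc_adj d u v \<longleftrightarrow> (\<exists>i<d. v = flp i u)"
proof
  assume "hc_adj d u v"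
  then have c: "card {i. i < d \<and> u ! i \<noteq> v ! i} = 1" by (simp add: hc_adj_def)
  then obtain i where i: "{i. i < d \<and> u ! i \<noteq> v ! i} = {i}" by (rule card_1_singletonE)
  then have "i < d" "u!i \<noteq> v!i" by auto
  have "v = flp i u"
  proof (rule nth_equalityI)
    show "length v = length (flp i u)" using assms by simp
    fix t assume "t < length v"
    then show "v ! t = flp i u ! t"
      using i assms \<open>u!i \<noteq> v!i\<close> by (cases "t = i") (auto simp: flp_def)
  qed
  then show "\<exists>i<d. v = flp i u" using \<open>i<d\<close> by blast
next
  assume "\<exists>i<d. v = flp i u"
  then obtain i where "i < d" "v = flp i u" by blast
  then have "{t. t < d \<and> u ! t \<noteq> v ! t} = {i}" using assms
    by (auto simp: flp_def nth_list_update)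
  then show "hc_adj d u v" using assms by (simp add: hc_adj_def hc_verts_def)
qed

lemma card_all: "card {v::bool list. length v = n} = 2 ^ n"
proof -
  have "card {xs::bool list. set xs \<subseteq> UNIV \<and> length xs = n} = card (UNIV::bool set) ^ n"
    by (rule card_lists_length_eq) simp
  then show ?thesis by simp
qed

lemma finite_all: "finite {v::bool list. length v = n}"
proof -
  have "finite {xs::bool list. set xs \<subseteq> UNIV \<and> length xs = n}"
    by (rule finite_lists_length_eq) simp
  then show ?thesis by simp
qed

lemma card_par:
  assumes "n \<ge> 1"
  shows "card {v. length v = n \<and> par v = c} = 2 ^ (n - 1)"
proof -
  define P where "P c = {v. length v = n \<and> par v = c}" for c
  have bij: "bij_betw (flp 0) (P c) (P (\<not> c))" for c
    by (rule bij_betw_byWitness[where f'="flp 0"]) (use assms in \<open>auto simp: P_def par_flp Suc_le_eq flp_flp\<close>)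
  have eq: "card (P True) = card (P False)" using bij_betw_same_card[OF bij[of True]] by simp
  have "P True \<union> P False = {v. length v = n}" "P True \<inter> P False = {}"
    by (auto simp: P_def)
  moreover have "finite (P c)" for c
    by (rule finite_subset[OF _ finite_all[of n]]) (auto simp: P_def)
  ultimately have "card (P True) + card (P False) = 2 ^ n"
    using card_Un_disjoint[of "P True" "P False"] card_all[of n] by simp
  moreover have "(2::nat) ^ n = 2 * 2 ^ (n - 1)" using assms
    by (metis Suc_diff_le diff_Suc_1 power_Suc)
  ultimately have "card (P c) = 2 ^ (n - 1)" using eq by (cases c) auto
  then show ?thesis by (simp add: P_def)
qed

theorem mainTheorem9:
  fixes d k :: nat
  assumes "d \<ge> 2" and "1 \<le> k" and "k \<le> d"
  shows "int (gamma_grLk (hc_verts d) (hc_adj d) k)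
           \<ge> \<lceil>(2::real) ^ d - 2 powr (real d - (real k + 1))\<rceil>"
proof -
  define jv where "jv v = min (lead v) (d - 1)" for v
  define rk where "rk v = (if par v then Suc (jv v) else 0)" for v
  define A where "A = {v \<in> hc_verts d. \<not> par v \<or> jv v < k}"
  define V where "V = hc_verts d"
  have finV: "finite V" using finite_all[of d] by (simp add: V_def hc_verts_def)
  have finA: "finite A" using finV by (simp add: A_def V_def)
  obtain xs where xs: "set xs = A" "distinct xs" using finite_distinct_list[OF finA] by blast
  define S where "S = sort_key rk xs"
  have S: "set S = A" "distinct S" "sorted (map rk S)" using xs by (auto simp: S_def)
  have lenS: "length S = card A" using S distinct_card by fastforce
  have adjpar: "par x = (\<not> par y)" if "hc_adj d x y" for x y
  proof -
    have l: "length x = d" "length y = d" using that by (auto simp: hc_adj_def hc_verts_def)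
    have "\<exists>i<d. y = flp i x" using adj_iff[OF l] that by simp
    then obtain i where "i < d" "y = flp i x" by blast
    then show ?thesis using par_flp l by simp
  qed
  have sortS: "rk (S!a) \<le> rk (S!b)" if "a \<le> b" "b < length S" for a b
    using sorted_nth_mono[OF S(3), of a b] that by simp
  have kl: "is_kL_seq V (hc_adj d) k S"
    unfolding is_kL_seq_def
  proof (intro conjI allI impI)
    show "distinct S" by (rule S)
    show "set S \<subseteq> V" using S by (auto simp: A_def V_def)
    fix i assume i: "i < length S"
    define v where "v = S!i"
    have vA: "v \<in> A" using i S v_def by auto
    then have lv: "length v = d" by (simp add: A_def hc_verts_def)
    show "\<exists>u\<in>closed_nbhd V (hc_adj d) (S ! i).
            card {j. j < i \<and> u \<in> open_nbhd V (hc_adj d) (S ! j)} < k"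
    proof (cases "par v")
      case False
      have E: "{j. j < i \<and> v \<in> open_nbhd V (hc_adj d) (S ! j)} = {}"
      proof (rule ccontr)
        assume "\<not> ?thesis"
        then obtain j where j: "j < i" "hc_adj d (S!j) v" by (auto simp: open_nbhd_def)
        then have "par (S!j)" using adjpar False by blast
        moreover have "rk (S!j) \<le> rk v" using sortS j i v_def by simp
        ultimately show False using False by (simp add: rk_def)
      qed
      show ?thesis
      proof (rule bexI[of _ v])
        show "card {j. j < i \<and> v \<in> open_nbhd V (hc_adj d) (S ! j)} < k" unfolding E using assms by simp
        show "v \<in> closed_nbhd V (hc_adj d) (S ! i)" by (simp add: closed_nbhd_def v_def)
      qed
    next
      case True
      then have jk: "jv v < k" using vA by (auto simp: A_def)
      have jd: "jv v < d" using assms by (simp add: jv_def)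
      define u where "u = flp (jv v) v"
      have lu: "length u = d" using lv by (simp add: u_def)
      have adjvu: "hc_adj d v u" unfolding adj_iff[OF lv lu] using jd u_def by blast
      have uV: "u \<in> V" using lu by (simp add: V_def hc_verts_def)
      have ucl: "u \<in> closed_nbhd V (hc_adj d) (S ! i)"
        using adjvu uV v_def by (simp add: closed_nbhd_def open_nbhd_def)
      have cardle: "card {j. j < i \<and> u \<in> open_nbhd V (hc_adj d) (S ! j)} \<le> jv v"
      proof -
      have "card {j. j < i \<and> u \<in> open_nbhd V (hc_adj d) (S ! j)} \<le> card ((\<lambda>b. flp b u) ` {..<jv v})"
      proof (rule card_inj_on_le)
        show "inj_on (\<lambda>j. S!j) {j. j < i \<and> u \<in> open_nbhd V (hc_adj d) (S ! j)}"
          using S(2) i by (auto simp: inj_on_def nth_eq_iff_index_eq)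
        show "finite ((\<lambda>b. flp b u) ` {..<jv v})" by simp
        show "(\<lambda>j. S!j) ` {j. j < i \<and> u \<in> open_nbhd V (hc_adj d) (S ! j)} \<subseteq> (\<lambda>b. flp b u) ` {..<jv v}"
        proof
          fix x assume "x \<in> (\<lambda>j. S!j) ` {j. j < i \<and> u \<in> open_nbhd V (hc_adj d) (S ! j)}"
          then obtain j where j: "j < i" "hc_adj d (S!j) u" "x = S!j"
            by (auto simp: open_nbhd_def)
          have lx: "length x = d" using j by (auto simp: hc_adj_def hc_verts_def)
          have "\<exists>b<d. u = flp b x" using adj_iff[OF lx lu] j by simp
          then obtain b where b: "b < d" "u = flp b x" by blast
          then have xb: "x = flp b u" using flp_flp by simp
          have "x \<noteq> v" using j i S(2) v_def by (simp add: nth_eq_iff_index_eq)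
          then have "b \<noteq> jv v" using xb u_def flp_flp by auto
          moreover have "\<not> b > jv v"
          proof
            assume bj: "b > jv v"
            then have jl: "jv v = lead v" "lead v < d - 1" using b by (auto simp: jv_def)
            have "\<forall>t<Suc (jv v). x!t"
            proof (intro allI impI)
              fix t assume "t < Suc (jv v)"
              then consider "t < lead v" | "t = lead v" using jl by linarith
              then show "x!t"
              proof cases
                case 1 then show ?thesis using lead_nth[OF 1] xb u_def bj jl
                  by (simp add: flp_def nth_list_update)
              next
                case 2 then show ?thesis using lead_lt[of v] lv jl xb u_def bj
                  by (simp add: flp_def nth_list_update)
              qed
            qed
            then have "Suc (jv v) \<le> lead x" using lead_ge[of "Suc (jv v)" x] lx jl by simp
            then have "jv x > jv v" using jl by (simp add: jv_def)
            moreover have "par x" using xb u_def par_flp lv lu b jd True by simp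
            ultimately have "rk x > rk v" using True by (simp add: rk_def)
            moreover have "rk x \<le> rk v" using sortS j i v_def by simp
            ultimately show False by simp
          qed
          ultimately show "x \<in> (\<lambda>b. flp b u) ` {..<jv v}" using xb by auto
        qed
      qed
      also have "\<dots> \<le> jv v" using card_image_le[of "{..<jv v}" "\<lambda>b. flp b u"] by simp
      finally show ?thesis .
      qed
      show ?thesis
      proof (rule bexI[of _ u])
        show "card {j. j < i \<and> u \<in> open_nbhd V (hc_adj d) (S ! j)} < k" using cardle jk by simp
      qed (rule ucl)
    qed
  qed
  have "length S \<le> gamma_grLk V (hc_adj d) k"
    unfolding gamma_grLk_def
  proof (rule Max_ge)
    show "length S \<in> {length S |S. is_kL_seq V (hc_adj d) k S}" using kl by blast
    have "{length S |S. is_kL_seq V (hc_adj d) k S} \<subseteq> {..card V}"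
    proof
      fix n assume "n \<in> {length S |S. is_kL_seq V (hc_adj d) k S}"
      then obtain T where T: "n = length T" "distinct T" "set T \<subseteq> V" by (auto simp: is_kL_seq_def)
      have "card (set T) \<le> card V" by (rule card_mono[OF finV T(3)])
      then show "n \<in> {..card V}" using distinct_card[OF T(2)] T(1) by simp
    qed
    then show "finite {length S |S. is_kL_seq V (hc_adj d) k S}" using finite_subset by blast
  qed
  then have gA: "card A \<le> gamma_grLk (hc_verts d) (hc_adj d) k" using lenS by (simp add: V_def)
  have cV: "card V = 2 ^ d" using card_all by (simp add: V_def hc_verts_def)
  show ?thesis
  proof (cases "k = d")
    case True
    have "A = V" using assms True by (auto simp: A_def V_def jv_def)
    then have "card A = 2 ^ d" using cV by simp
    moreover have "\<lceil>(2::real) ^ d - 2 powr (real d - (real k + 1))\<rceil> \<le> int (2 ^ d)"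
      by (rule ceiling_le) simp
    ultimately show ?thesis using gA by linarith
  next
    case False
    then have kd: "k < d" using assms by simp
    define B where "B = {v \<in> V. par v \<and> \<not> jv v < k}"
    have AB: "A \<union> B = V" "A \<inter> B = {}" by (auto simp: A_def B_def V_def)
    have "card A + card B = 2 ^ d"
      using card_Un_disjoint[of A B] AB finV cV by (metis finite_Un)
    moreover have "card B \<le> 2 ^ (d - k - 1)"
    proof -
      define c where "c = (\<not> par (replicate k True))"
      have "card B \<le> card {w. length w = d - k \<and> par w = c}"
      proof (rule card_inj_on_le)
        have tk: "take k v = replicate k True" if "v \<in> B" for v
        proof -
          have "k \<le> lead v" using that kd by (auto simp: B_def jv_def)
          then show ?thesis using lead_nth[of _ v]
            by (intro nth_equalityI) (use lead_le_len[of v] in \<open>auto simp: B_def V_def hc_verts_def\<close>)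
        qed
        show "inj_on (drop k) B"
        proof
          fix x y assume "x \<in> B" "y \<in> B" "drop k x = drop k y"
          then show "x = y" using tk by (metis append_take_drop_id)
        qed
        show "drop k ` B \<subseteq> {w. length w = d - k \<and> par w = c}"
        proof
          fix w assume "w \<in> drop k ` B"
          then obtain v where v: "v \<in> B" "w = drop k v" by blast
          have "par v = (par (take k v) \<noteq> par (drop k v))"
            using par_append by (metis append_take_drop_id)
          then show "w \<in> {w. length w = d - k \<and> par w = c}"
            using v tk[OF v(1)] by (auto simp: B_def V_def hc_verts_def c_def)
        qed
        show "finite {w. length w = d - k \<and> par w = c}"
          by (rule finite_subset[OF _ finite_all[of "d-k"]]) auto
      qed
      also have "\<dots> = 2 ^ (d - k - 1)" using card_par[of "d-k" c] kd by simp
      finally show ?thesis .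
    qed
    ultimately have iA: "int (card A) \<ge> 2 ^ d - 2 ^ (d - k - 1)"
    proof -
      assume a: "card A + card B = 2 ^ d" "card B \<le> 2 ^ (d - k - 1)"
      have "int (card A) + int (card B) = 2 ^ d" using a(1) by (metis of_nat_add of_nat_numeral of_nat_power)
      moreover have "int (card B) \<le> 2 ^ (d - k - 1)" using a(2) by (metis of_nat_le_iff of_nat_numeral of_nat_power)
      ultimately show ?thesis by linarith
    qed
    have pw: "(2::real) powr (real d - (real k + 1)) = 2 ^ (d - k - 1)"
    proof -
      have "real d - (real k + 1) = real (d - k - 1)" using kd by simp
      then have "(2::real) powr (real d - (real k + 1)) = 2 powr (real (d - k - 1))" by simp
      also have "\<dots> = 2 ^ (d - k - 1)" by (rule powr_realpow) simp
      finally show ?thesis .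
    qed
    have e: "(2::real) ^ d - 2 ^ (d - k - 1) = of_int ((2::int) ^ d - 2 ^ (d - k - 1))" by simp
    have ce: "\<lceil>(2::real) ^ d - 2 powr (real d - (real k + 1))\<rceil> = (2::int) ^ d - 2 ^ (d - k - 1)"
      unfolding pw e by (rule ceiling_of_int)
    have "int (card A) \<le> int (gamma_grLk (hc_verts d) (hc_adj d) k)" using gA by (rule of_nat_mono)
    then show ?thesis unfolding ce using iA by linarith
  qed
qed

end
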